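(* Let $E$ be a Banach space with $E = V \oplus W$ ($V, W$ linear subspaces), and let $\Phi\colon E \to \mathbb{R}$ be locally Lipschitz. For $w \in W$ set $\varphi(w) = \sup_{g \in V} \Phi(g+w)$ and $$V(w) = \{ v \in V : \Phi(v+w) = \max_{g \in V} \Phi(g+w) \}.$$ Assume: (a) for every $w \in W$, $V(w) \neq \varnothing$ (so $\varphi(w)=\Phi(v+w)$ for $v\in V(w)$); (b) the functional $\varphi\colon W \to \mathbb{R}$ is bounded below and attains its minimum at some point $\overline{w} \in W$; (c) there exists a continuous map $s\colon W \to V$ with $s(w) \in V(w)$ for all $w \in W$. Then $\overline{u} = s(\overline{w}) + \overline{w}$ is a critical point of $\Phi$, i.e. $0 \in \partial \Phi(\overline{u})$, and $$\Phi(\overline{u}) = \min_{w \in W} \max_{v \in V} \Phi(v+w).$$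
   Context: For a locally Lipschitz $\Phi\colon E\to\mathbb{R}$, the generalized directional derivative is $\Phi^\circ(x;v) = \limsup_{y \to x,\, t \downarrow 0} \frac{\Phi(y+tv) - \Phi(y)}{t}$, and the Clarke subdifferential is $\partial\Phi(x) = \{x^* \in E^* : \Phi^\circ(x;v) \ge \langle x^*, v\rangle \text{ for all } v \in E\}$. A point $x$ is a critical point of $\Phi$ if $0 \in \partial\Phi(x)$. *)

theory Defs
  imports "HOL-Analysis.Analysis"
begin

definition locally_lipschitz :: "('a::metric_space \<Rightarrow> real) \<Rightarrow> bool" where
  "locally_lipschitz \<Phi> \<longleftrightarrow> (\<forall>x. \<exists>r>0. \<exists>L. L-lipschitz_on (ball x r) \<Phi>)"

definition clarke_dd :: "('a::real_normed_vector \<Rightarrow> real) \<Rightarrow> 'a \<Rightarrow> 'a \<Rightarrow> ereal" where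
  "clarke_dd \<Phi> x v =
     Limsup (nhds x \<times>\<^sub>F at_right (0::real))
            (\<lambda>(y, t). ereal ((\<Phi> (y + t *\<^sub>R v) - \<Phi> y) / t))"

definition clarke_subdiff :: "('a::real_normed_vector \<Rightarrow> real) \<Rightarrow> 'a \<Rightarrow> ('a \<Rightarrow> real) set" where
  "clarke_subdiff \<Phi> x =
     {xs. bounded_linear xs \<and> (\<forall>v. clarke_dd \<Phi> x v \<ge> ereal (xs v))}"

definition max_set :: "('a::real_vector \<Rightarrow> real) \<Rightarrow> 'a set \<Rightarrow> 'a \<Rightarrow> 'a set" where
  "max_set \<Phi> V w = {v \<in> V. \<forall>g\<in>V. \<Phi> (g + w) \<le> \<Phi> (v + w)}"

end

theory Submission
  imports Defs
begin

lemma sup_eq_max: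
  fixes \<Phi> :: "'a::real_vector \<Rightarrow> real"
  assumes "v \<in> max_set \<Phi> V w"
  shows "(SUP g\<in>V. \<Phi> (g + w)) = \<Phi> (v + w)"
  using assms unfolding max_set_def
  by (intro cSup_eq_maximum) auto

theorem theorem8:
  fixes \<Phi> :: "'a::banach \<Rightarrow> real"
    and V W :: "'a set"
    and s :: "'a \<Rightarrow> 'a"
    and wbar :: 'a
  assumes "subspace V" and "subspace W"
    and "V \<inter> W = {0}" and "V + W = UNIV"
    and "locally_lipschitz \<Phi>"
    and a: "\<forall>w\<in>W. max_set \<Phi> V w \<noteq> {}"
    and b_bdd: "bdd_below ((\<lambda>w. SUP g\<in>V. \<Phi> (g + w)) ` W)"
    and b_min: "wbar \<in> W" "\<forall>w\<in>W. (SUP g\<in>V. \<Phi> (g + wbar)) \<le> (SUP g\<in>V. \<Phi> (g + w))"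
    and c: "continuous_on W s" "\<forall>w\<in>W. s w \<in> V \<and> s w \<in> max_set \<Phi> V w"
  shows "(\<lambda>_. 0) \<in> clarke_subdiff \<Phi> (s wbar + wbar)
    \<and> \<Phi> (s wbar + wbar) = (INF w\<in>W. SUP v\<in>V. \<Phi> (v + w))"
proof
  have phi: "(SUP g\<in>V. \<Phi> (g + w)) = \<Phi> (s w + w)" if "w \<in> W" for w
    using sup_eq_max c(2) that by blast
  show "\<Phi> (s wbar + wbar) = (INF w\<in>W. SUP v\<in>V. \<Phi> (v + w))"
    using b_min phi[OF b_min(1)] by (intro cInf_eq_minimum[symmetric]) (auto intro!: image_eqI[where x=wbar])
  let ?u = "s wbar + wbar"
  have "clarke_dd \<Phi> ?u v \<ge> 0" for v
  proof -
    obtain a b where ab: "a \<in> V" "b \<in> W" "v = a + b"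
      using assms(4) by (metis UNIV_I set_plus_elim)
    define y where "y t = s (wbar + t *\<^sub>R b) + wbar - t *\<^sub>R a" for t :: real
    have inW: "wbar + t *\<^sub>R b \<in> W" for t
      using assms(2) b_min(1) ab(2) by (simp add: subspace_add subspace_scale)
    have "((\<lambda>t. s (wbar + t *\<^sub>R b)) \<longlongrightarrow> s (wbar + 0 *\<^sub>R b)) (at_right 0)"
      apply (rule continuous_on_tendsto_compose[OF c(1), where g="\<lambda>t. wbar + t *\<^sub>R b"])
        apply (intro tendsto_intros tendsto_ident_at)
      using inW b_min(1) by auto
    hence "(y \<longlongrightarrow> s (wbar + 0 *\<^sub>R b) + wbar - 0 *\<^sub>R a) (at_right 0)"
      unfolding y_def by (intro tendsto_intros tendsto_ident_at)
    hence ylim: "(y \<longlongrightarrow> ?u) (at_right 0)" by simp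
    have lim: "filterlim (\<lambda>t. (y t, t)) (nhds ?u \<times>\<^sub>F at_right 0) (at_right (0::real))"
      by (intro filterlim_Pair ylim filterlim_ident)
    have pos: "0 \<le> (\<Phi> (y t + t *\<^sub>R v) - \<Phi> (y t)) / t" if "t > 0" for t
    proof -
      have e: "y t + t *\<^sub>R v = s (wbar + t *\<^sub>R b) + (wbar + t *\<^sub>R b)"
        unfolding y_def ab(3) by (simp add: algebra_simps)
      have "y t = (s (wbar + t *\<^sub>R b) - t *\<^sub>R a) + wbar" unfolding y_def by simp
      moreover have "s (wbar + t *\<^sub>R b) - t *\<^sub>R a \<in> V"
        using c(2) inW ab(1) assms(1) by (simp add: subspace_diff subspace_scale)
      ultimately have "\<Phi> (y t) \<le> \<Phi> ?u"
        using c(2) b_min(1) unfolding max_set_def by auto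
      also have "\<dots> \<le> \<Phi> (y t + t *\<^sub>R v)"
        using b_min(2) inW[of t] phi[OF inW[of t]] phi[OF b_min(1)] e by auto
      finally show ?thesis using that by simp
    qed
    show ?thesis
      unfolding clarke_dd_def
    proof (rule Limsup_greatest)
      fix P :: "'a \<times> real \<Rightarrow> bool" assume "eventually P (nhds ?u \<times>\<^sub>F at_right 0)"
      hence "eventually (\<lambda>t. P (y t, t)) (at_right (0::real))"
        using lim by (simp add: filterlim_iff)
      moreover have "eventually (\<lambda>t. t > 0) (at_right (0::real))"
        by (simp add: eventually_at_right_less)
      ultimately have "eventually (\<lambda>t. P (y t, t) \<and> t > 0) (at_right (0::real))"
        by (rule eventually_conj)
      then obtain t where t: "P (y t, t)" "t > 0"
        using eventually_happens[of _ "at_right (0::real)"] by auto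
      have "(0::ereal) \<le> ereal ((\<Phi> (y t + t *\<^sub>R v) - \<Phi> (y t)) / t)"
        using pos[OF t(2)] by simp
      also have "\<dots> \<le> (SUP x\<in>Collect P. (\<lambda>(y, t). ereal ((\<Phi> (y + t *\<^sub>R v) - \<Phi> y) / t)) x)"
        using t(1) by (intro SUP_upper2[of "(y t, t)"]) auto
      finally show "0 \<le> (SUP x\<in>Collect P. (\<lambda>(y, t). ereal ((\<Phi> (y + t *\<^sub>R v) - \<Phi> y) / t)) x)" .
    qed
  qed
  then show "(\<lambda>_. 0) \<in> clarke_subdiff \<Phi> ?u"
    unfolding clarke_subdiff_def by (auto simp: bounded_linear_zero zero_ereal_def)
qed

end
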